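(* Let $m\geq 2$, $1\leq j\leq m-1$, $N\geq 1$, $s\geq 0$ be integers, let $p$ be a prime, and let $a_0,\ldots,a_m\in\mathbb{Z}$ with $a_0a_{j-1}a_ja_m\neq 0$ and $p\nmid a_{j-1}a_j$. Let $$f=p^sa_{j-1}z^{j-1}+p^Na_jz^j+\sum_{\substack{0\leq i\leq m\\ i\neq j-1,\,j}}a_iz^i\in\mathbb{Z}[z]$$ be primitive, and suppose $$p^N|a_j|>|a_ma_{j-1}|p^{2s}+\sum_{i=2}^{j}|a_m^{i}a_{j-i}|p^{is}+\sum_{i=j+1}^{m}\frac{|a_i|}{|a_m|^{i-j}}.$$ Then $f$ is a product of at most $m-j$ irreducible polynomials in $\mathbb{Z}[z]$. In particular, if $j=m-1$, then $f$ is irreducible in $\mathbb{Z}[z]$.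
   Context: A polynomial in $\mathbb{Z}[z]$ is primitive if the greatest common divisor of its coefficients is $1$. "$f$ is a product of at most $r$ irreducible polynomials" means that in a factorization of $f$ into irreducible elements of $\mathbb{Z}[z]$, the number of factors (counted with multiplicity) is at most $r$. An empty sum is $0$. *)

theory Defs
  imports Complex_Main "HOL-Computational_Algebra.Computational_Algebra"
begin

definition product_of_at_most_irreducibles :: "nat \<Rightarrow> int poly \<Rightarrow> bool" where
  "product_of_at_most_irreducibles r f \<longleftrightarrow>
     (\<exists>fs :: int poly list. f = prod_list fs \<and> (\<forall>g\<in>set fs. irreducible g) \<and> length fs \<le> r)"

end

theory Submission imports Defs "HOL-Complex_Analysis.Complex_Analysis" begin

hide_const (open) Henstock_Kurzweil_Integration.content


lemma zorder_poly:
  fixes p :: "complex poly"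
  assumes "p \<noteq> 0"
  shows "zorder (poly p) z = int (order z p)"
proof -
  obtain q where q: "p = [:- z, 1:] ^ order z p * q" and nd: "\<not> [:- z, 1:] dvd q"
    using order_decomp[OF assms] by blast
  have "poly q z \<noteq> 0" using nd by (simp add: poly_eq_0_iff_dvd)
  show ?thesis
  proof (rule zorder_eqI[of UNIV z "poly q"])
    show "poly q holomorphic_on UNIV" by (auto intro!: holomorphic_intros)
    fix w show "poly p w = poly q w * (w - z) powi int (order z p)"
      by (subst q) (simp add: power_int_of_nat mult.commute)
  qed (use \<open>poly q z \<noteq> 0\<close> in auto)
qed

lemma map_poly_of_int_mult:
  "map_poly (of_int :: int \<Rightarrow> complex) (p * q) = map_poly of_int p * map_poly of_int q"
  by (rule poly_eqI) (simp add: coeff_map_poly coeff_mult)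

lemma map_poly_of_int_prod_list:
  "map_poly (of_int :: int \<Rightarrow> complex) (prod_list fs) = prod_list (map (map_poly of_int) fs)"
  by (induction fs) (auto simp: map_poly_of_int_mult)

lemma factor_exists:
  fixes f :: "int poly"
  assumes "f \<noteq> 0" "\<not> is_unit f"
  shows "\<exists>fs. f = prod_list fs \<and> (\<forall>g\<in>set fs. irreducible g)"
proof -
  obtain A where A: "\<And>x. x \<in># A \<Longrightarrow> prime x" "normalize (prod_mset A) = normalize f"
    using prime_factorization_exists'[OF assms(1)] by blast
  obtain xs where xs: "mset xs = A" using ex_mset by blast
  have d1: "prod_list xs dvd f" using A(2) xs
    by (metis dvd_normalize_iff dvd_refl prod_mset_prod_list)
  have d2: "f dvd prod_list xs" using A(2) xs
    by (metis dvd_normalize_iff dvd_refl prod_mset_prod_list)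
  obtain q where q: "f = prod_list xs * q" using d1 by blast
  obtain q' where q': "prod_list xs = f * q'" using d2 by blast
  have "f * 1 = f * (q' * q)" using q q' by (simp add: mult.assoc mult.commute)
  then have "q' * q = 1" using assms(1) by (metis mult_cancel_left)
  then have uq: "is_unit q" by (metis dvd_triv_right)
  have pr: "\<forall>g\<in>set xs. irreducible g"
    using xs A(1) by (auto intro!: prime_elem_imp_irreducible prime_imp_prime_elem)
  show ?thesis
  proof (cases xs)
    case Nil
    then have "f = q" using q by simp
    then show ?thesis using assms uq by simp
  next
    case (Cons x ys)
    have "irreducible (q * x)" using pr Cons uq
      by (simp add: irreducible_mult_unit_left)
    then show ?thesis using q Cons pr
      by (intro exI[of _ "(q * x) # ys"]) (auto simp: mult_ac)
  qed
qed


lemma roots_inside: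
  fixes F :: "complex poly" and c :: complex and r :: real
  assumes F: "F \<noteq> 0" and r: "r > 0" and c: "c \<noteq> 0" and j: "j > 0"
    and bnd: "\<And>z. norm z = r \<Longrightarrow> norm (poly F z - c * z ^ j) < norm (c * z ^ j)"
  shows "(\<Sum>x\<in>{x. poly F x = 0 \<and> norm x < r}. order x F) = j"
proof -
  have eqfg: "(\<lambda>p. c * p ^ j + (poly F p - c * p ^ j)) = poly F" by auto
  have fin: "finite {p. poly F p = 0}" using F by (rule poly_roots_finite)
  have z0: "{p \<in> UNIV. c * p ^ j = 0} = {0}" using c j by auto
  have holo1: "(\<lambda>p. c * p ^ j) holomorphic_on UNIV" by (auto intro!: holomorphic_intros)
  have holo2: "(\<lambda>p. poly F p - c * p ^ j) holomorphic_on UNIV" by (auto intro!: holomorphic_intros)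
  note Rouche_theorem[of UNIV "\<lambda>p. c * p ^ j" "\<lambda>p. poly F p - c * p ^ j" "circlepath 0 r", unfolded eqfg z0]
  then have R: "(\<Sum>p | poly F p = 0. winding_number (circlepath 0 r) p * of_int (zorder (poly F) p))
        = winding_number (circlepath 0 r) 0 * of_int (zorder (\<lambda>p. c * p ^ j) 0)"
    using holo1 holo2 fin r bnd by (auto simp: path_image_circlepath_nonneg)
  have zo: "zorder (\<lambda>p. c * p ^ j) 0 = int j"
    by (rule zorder_eqI[of UNIV 0 "\<lambda>_. c"]) (use c in \<open>auto simp: power_int_of_nat\<close>)
  have "winding_number (circlepath 0 r) 0 = 1" using r by (simp add: winding_number_circlepath_centre)
  with R zo have R2: "(\<Sum>p\<in>{p. poly F p = 0}. winding_number (circlepath 0 r) p * of_int (zorder (poly F) p)) = of_nat j"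
    by simp
  have "(\<Sum>p\<in>{p. poly F p = 0}. winding_number (circlepath 0 r) p * of_int (zorder (poly F) p))
      = (\<Sum>p\<in>{p. poly F p = 0}. if norm p < r then of_nat (order p F) else 0)"
  proof (rule sum.cong[OF refl])
    fix p assume p: "p \<in> {p. poly F p = 0}"
    have "norm p \<noteq> r"
    proof
      assume "norm p = r"
      from bnd[OF this] p show False by simp
    qed
    show "winding_number (circlepath 0 r) p * of_int (zorder (poly F) p) =
          (if norm p < r then of_nat (order p F) else 0)"
    proof (cases "norm p < r")
      case True
      then show ?thesis using winding_number_circlepath[of p 0 r] zorder_poly[OF F] by simp
    next
      case False
      have "winding_number (circlepath 0 r) p = 0"
      proof (rule winding_number_zero_outside[of _ "cball 0 r"])
        show "p \<notin> cball 0 r" using False \<open>norm p \<noteq> r\<close> by auto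
        show "path_image (circlepath 0 r) \<subseteq> cball 0 r"
          using r by (auto simp: path_image_circlepath_nonneg)
      qed auto
      then show ?thesis using False by simp
    qed
  qed
  also have "\<dots> = (\<Sum>p\<in>{x. poly F x = 0 \<and> norm x < r}. of_nat (order p F))"
    using fin by (simp add: sum.If_cases Int_def conj_commute)
  finally have "(of_nat (\<Sum>p\<in>{x. poly F x = 0 \<and> norm x < r}. order p F) :: complex) = of_nat j"
    using R2 by simp
  then show ?thesis by (simp only: of_nat_eq_iff)
qed


lemma root_outside:
  fixes g :: "int poly" and r A :: real
  assumes deg: "degree g \<ge> 1" and g0: "coeff g 0 \<noteq> 0" and lc: "\<bar>of_int (lead_coeff g)\<bar> \<le> A"
    and r: "r > 0" and Ar: "A * r \<le> 1"
  shows "\<exists>z. poly (map_poly (of_int :: int \<Rightarrow> complex) g) z = 0 \<and> norm z \<ge> r"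
proof (rule ccontr)
  assume H: "\<not> ?thesis"
  define G where "G = map_poly (of_int :: int \<Rightarrow> complex) g"
  have dG: "degree G = degree g" unfolding G_def by (simp add: degree_map_poly)
  have lG: "lead_coeff G = of_int (lead_coeff g)" using dG unfolding G_def by (simp add: coeff_map_poly)
  obtain root where rt: "smult (lead_coeff G) (\<Prod>i<degree G. [:-root i, 1:]) = G"
    using complex_poly_decompose' by blast
  have lgnz: "lead_coeff g \<noteq> 0" using deg by auto
  have inside: "norm (root i) < r" if "i < degree G" for i
  proof -
    have "poly G (root i) = lead_coeff G * (\<Prod>k<degree G. poly [:-root k, 1:] (root i))"
      by (subst rt[symmetric]) (simp add: poly_prod)
    also have "(\<Prod>k<degree G. poly [:-root k, 1:] (root i)) = 0"
      using that by (subst prod_zero_iff) auto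
    then have "lead_coeff G * (\<Prod>k<degree G. poly [:-root k, 1:] (root i)) = 0" by simp
    finally show ?thesis using H unfolding G_def by (meson not_le)
  qed
  have "poly G 0 = lead_coeff G * (\<Prod>k<degree G. - root k)"
    by (subst rt[symmetric]) (simp add: poly_prod)
  then have "norm (poly G 0) = \<bar>of_int (lead_coeff g)\<bar> * (\<Prod>k<degree G. norm (root k))"
    by (simp add: lG norm_mult prod_norm[symmetric])
  moreover have "(\<Prod>k<degree G. norm (root k)) < r ^ degree G"
  proof -
    define d where "d = degree G - 1"
    have d: "degree G = Suc d" using deg dG unfolding d_def by simp
    have pm: "(\<Prod>k<d. norm (root k)) \<le> r ^ d"
      using prod_mono[of "{..<d}" "\<lambda>k. norm (root k)" "\<lambda>k. r"] inside d
      by (auto simp: less_imp_le)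
    have p0: "0 \<le> (\<Prod>k<d. norm (root k))" by (simp add: prod_nonneg)
    have "(\<Prod>k<d. norm (root k)) * norm (root d) \<le> r ^ d * norm (root d)"
      by (rule mult_right_mono[OF pm]) simp
    also have "\<dots> < r ^ d * r"
      by (rule mult_strict_left_mono) (use inside[of d] d r in auto)
    finally show ?thesis using d by (simp add: mult.commute)
  qed
  moreover have "r ^ degree G \<le> r"
  proof -
    have "A \<ge> 1" using lc lgnz by linarith
    then have "1 * r \<le> A * r" using r by (intro mult_right_mono) auto
    then have "r \<le> 1" using Ar by simp
    then show ?thesis using power_decreasing[of 1 "degree G" r] deg dG r by simp
  qed
  ultimately have "norm (poly G 0) < A * r"
  proof -
    assume e: "norm (poly G 0) = \<bar>of_int (lead_coeff g)\<bar> * (\<Prod>k<degree G. norm (root k))"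
      and l: "(\<Prod>k<degree G. norm (root k)) < r ^ degree G" and rr: "r ^ degree G \<le> r"
    have "\<bar>of_int (lead_coeff g)\<bar> * (\<Prod>k<degree G. norm (root k)) < \<bar>of_int (lead_coeff g)\<bar> * r ^ degree G"
      using l lgnz by simp
    also have "\<dots> \<le> A * r" using lc rr r by (intro mult_mono) auto
    finally show ?thesis using e by simp
  qed
  moreover have "poly G 0 = of_int (coeff g 0)" unfolding G_def by (simp add: poly_0_coeff_0 coeff_map_poly)
  then have "norm (poly G 0) \<ge> 1" using g0 by (simp add: norm_of_int del: of_int_abs)
  ultimately show False using Ar by linarith
qed


lemma size_filter_proots_ge:
  fixes Gs :: "complex poly list"
  assumes "prod_list Gs \<noteq> 0" "\<forall>G\<in>set Gs. \<exists>z. poly G z = 0 \<and> Q z"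
  shows "length Gs \<le> size (filter_mset Q (proots (prod_list Gs)))"
  using assms
proof (induction Gs)
  case Nil then show ?case by simp
next
  case (Cons G Gs)
  have G0: "G \<noteq> 0" and R0: "prod_list Gs \<noteq> 0" using Cons.prems by auto
  obtain z where z: "poly G z = 0" "Q z" using Cons.prems by auto
  have "count (proots G) z > 0" using z G0 by (simp add: order_root)
  then have "z \<in># filter_mset Q (proots G)" using z by simp
  then have "size (filter_mset Q (proots G)) \<ge> 1"
  proof -
    have "filter_mset Q (proots G) \<noteq> {#}" using \<open>z \<in># filter_mset Q (proots G)\<close> by auto
    then show ?thesis by (metis One_nat_def Suc_leI neq0_conv size_eq_0_iff_empty)
  qed
  moreover have "length Gs \<le> size (filter_mset Q (proots (prod_list Gs)))"
    using Cons R0 by auto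
  ultimately show ?case using G0 R0 by (simp add: proots_mult)
qed

lemma count_factors:
  fixes F :: "complex poly" and Gs :: "complex poly list"
  assumes F: "F = prod_list Gs" "F \<noteq> 0"
    and out: "\<forall>G\<in>set Gs. \<exists>z. poly G z = 0 \<and> norm z \<ge> r"
    and inn: "(\<Sum>x\<in>{x. poly F x = 0 \<and> norm x < r}. order x F) = j"
  shows "length Gs + j \<le> degree F"
proof -
  have "size (proots F) = degree F" by (rule size_proots_complex)
  moreover have "proots F = filter_mset (\<lambda>x. norm x < r) (proots F) + filter_mset (\<lambda>x. \<not> norm x < r) (proots F)"
    by (rule multiset_partition)
  moreover have "size (filter_mset (\<lambda>x. norm x < r) (proots F)) = j"
  proof -
    have "set_mset (filter_mset (\<lambda>x. norm x < r) (proots F)) = {x. poly F x = 0 \<and> norm x < r}"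
      using F(2) by auto
    then show ?thesis unfolding size_multiset_overloaded_eq using F(2) inn by simp
  qed
  moreover have "length Gs \<le> size (filter_mset (\<lambda>x. \<not> norm x < r) (proots F))"
    using size_filter_proots_ge[of Gs "\<lambda>x. \<not> norm x < r"] F out by (auto simp: not_less)
  ultimately show ?thesis by (metis add.commute add_le_cancel_left size_union)
qed


lemma key_ineq:
  fixes B A :: "nat \<Rightarrow> real" and am ps K :: real
  assumes K: "K = am * ps" and am: "am \<ge> 1" and ps: "ps \<ge> 1" and j: "1 \<le> j" "j < m"
    and Bj1: "B (j - 1) = ps * A (j - 1)"
    and BA: "\<And>i. i \<le> m \<Longrightarrow> i \<noteq> j - 1 \<Longrightarrow> i \<noteq> j \<Longrightarrow> B i = A i"
    and A0: "\<And>i. A i \<ge> 0"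
    and ineq: "B j > am * A (j - 1) * ps ^ 2 + (\<Sum>i=2..j. am ^ i * A (j - i) * ps ^ i)
                 + (\<Sum>i=j+1..m. A i / am ^ (i - j))"
  shows "(\<Sum>i\<in>{..m} - {j}. B i * (1 / K) ^ i) < B j * (1 / K) ^ j"
proof -
  have K1: "K \<ge> 1" using K am ps by (metis mult_mono' dual_order.trans less_eq_real_def zero_less_one mult_1)
  then have Kp: "K > 0" by simp
  have split: "{..m} - {j} = {..<j} \<union> {Suc j..m}" using j by auto
  have S: "(\<Sum>i\<in>{..m} - {j}. B i * (1 / K) ^ i) = (\<Sum>i<j. B i * (1 / K) ^ i) + (\<Sum>i=Suc j..m. B i * (1 / K) ^ i)"
    unfolding split by (rule sum.union_disjoint) auto
  have e1: "(\<Sum>i<j. B i * (1 / K) ^ i) * K ^ j = (\<Sum>i<j. B i * K ^ (j - i))"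
    unfolding sum_distrib_right
  proof (rule sum.cong[OF refl])
    fix i assume "i \<in> {..<j}"
    then have "K ^ j = K ^ i * K ^ (j - i)" by (simp add: power_add[symmetric])
    then show "B i * (1 / K) ^ i * K ^ j = B i * K ^ (j - i)"
      using Kp by (simp add: power_one_over field_simps)
  qed
  have e2: "(\<Sum>i<j. B i * K ^ (j - i)) = (\<Sum>k=1..j. B (j - k) * K ^ k)"
    by (rule sum.reindex_bij_witness[of _ "\<lambda>k. j - k" "\<lambda>i. j - i"]) auto
  have e3: "(\<Sum>k=1..j. B (j - k) * K ^ k) = B (j - 1) * K + (\<Sum>k=2..j. B (j - k) * K ^ k)"
    using j by (simp add: sum.atLeast_Suc_atMost numeral_2_eq_2)
  have e4: "B (j - 1) * K = am * A (j - 1) * ps ^ 2" using Bj1 K by (simp add: power2_eq_square)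
  have e5: "(\<Sum>k=2..j. B (j - k) * K ^ k) = (\<Sum>i=2..j. am ^ i * A (j - i) * ps ^ i)"
  proof (rule sum.cong[OF refl])
    fix k assume k: "k \<in> {2..j}"
    then have "B (j - k) = A (j - k)" using j by (intro BA) auto
    then show "B (j - k) * K ^ k = am ^ k * A (j - k) * ps ^ k"
      using K by (simp add: power_mult_distrib)
  qed
  have e6: "(\<Sum>i=Suc j..m. B i * (1 / K) ^ i) * K ^ j \<le> (\<Sum>i=Suc j..m. A i / am ^ (i - j))"
    unfolding sum_distrib_right
  proof (rule sum_mono)
    fix i assume i: "i \<in> {Suc j..m}"
    then have Bi: "B i = A i" using j by (intro BA) auto
    have "K ^ i = K ^ j * K ^ (i - j)" using i by (simp add: power_add[symmetric])
    then have "B i * (1 / K) ^ i * K ^ j = A i / K ^ (i - j)"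
      using Kp Bi by (simp add: power_one_over field_simps)
    also have "\<dots> \<le> A i / am ^ (i - j)"
    proof (rule divide_left_mono)
      have "am * 1 \<le> am * ps" using am ps by (intro mult_left_mono) auto
      then show "am ^ (i - j) \<le> K ^ (i - j)" using K am
        by (intro power_mono) auto
    qed (use A0 am Kp in auto)
    finally show "B i * (1 / K) ^ i * K ^ j \<le> A i / am ^ (i - j)" .
  qed
  have "(\<Sum>i\<in>{..m} - {j}. B i * (1 / K) ^ i) * K ^ j < B j"
    using S e1 e2 e3 e4 e5 e6 ineq by (simp add: distrib_right)
  then show ?thesis using Kp by (simp add: power_one_over field_simps)
qed


theorem corollary7:
  fixes m j N s :: nat and p :: int and a :: "nat \<Rightarrow> int" and f :: "int poly"
  assumes m: "m \<ge> 2"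
    and j: "1 \<le> j" "j \<le> m - 1"
    and N: "N \<ge> 1"
    and p: "prime p"
    and nz: "a 0 * a (j - 1) * a j * a m \<noteq> 0"
    and ndvd: "\<not> p dvd a (j - 1) * a j"
    and f_def: "f = monom (p ^ s * a (j - 1)) (j - 1) + monom (p ^ N * a j) j
                   + (\<Sum>i\<in>{0..m} - {j - 1, j}. monom (a i) i)"
    and prim: "content f = 1"
    and ineq: "real_of_int (p ^ N * \<bar>a j\<bar>) >
                 real_of_int (\<bar>a m * a (j - 1)\<bar> * p ^ (2 * s))
               + (\<Sum>i=2..j. real_of_int (\<bar>a m ^ i * a (j - i)\<bar> * p ^ (i * s)))
               + (\<Sum>i=j+1..m. real_of_int \<bar>a i\<bar> / real_of_int \<bar>a m\<bar> ^ (i - j))"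
  shows "product_of_at_most_irreducibles (m - j) f \<and> (j = m - 1 \<longrightarrow> irreducible f)"
proof -
  have p0: "p > 0" using p by (simp add: prime_gt_0_int)
  have jm: "j < m" using j m by simp
  have jj: "j \<noteq> j - 1" "j - 1 \<noteq> j" using j by auto
  have a0: "a 0 \<noteq> 0" "a (j - 1) \<noteq> 0" "a j \<noteq> 0" "a m \<noteq> 0" using nz by auto
  have cf: "coeff f i = (if i = j - 1 then p ^ s * a (j - 1) else if i = j then p ^ N * a j
                         else if i \<le> m then a i else 0)" for i
    using j unfolding f_def by (auto simp: coeff_sum coeff_monom)
  have cm: "coeff f m = a m" using cf[of m] jm by simp
  have degf: "degree f = m"
  proof (rule antisym)
    show "degree f \<le> m" by (rule degree_le) (use cf jm in auto)
    show "m \<le> degree f" by (rule le_degree) (use cm a0 in auto)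
  qed
  have lcf: "lead_coeff f = a m" using degf cm by simp
  have c0: "coeff f 0 \<noteq> 0" using cf[of 0] a0 p0 by (auto split: if_splits)
  have fnz: "f \<noteq> 0" using c0 by auto
  have nu: "\<not> is_unit f"
  proof
    assume "is_unit f"
    then have "degree f \<le> degree (1 :: int poly)" by (intro dvd_imp_degree_le) auto
    then show False using degf m by simp
  qed
  obtain fs where fs: "f = prod_list fs" "\<forall>g\<in>set fs. irreducible g"
    using factor_exists[OF fnz nu] by blast
  define F where "F = map_poly (of_int :: int \<Rightarrow> complex) f"
  define Gs where "Gs = map (map_poly (of_int :: int \<Rightarrow> complex)) fs"
  have FG: "F = prod_list Gs" unfolding F_def Gs_def by (subst fs(1)) (rule map_poly_of_int_prod_list)
  have degF: "degree F = m" unfolding F_def using degf by (simp add: degree_map_poly)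
  have cF: "coeff F i = of_int (coeff f i)" for i unfolding F_def by (simp add: coeff_map_poly)
  have Fnz: "F \<noteq> 0" using cF[of m] cm a0 by auto
  define am where "am = real_of_int \<bar>a m\<bar>"
  define ps where "ps = real_of_int p ^ s"
  define K where "K = am * ps"
  define r where "r = 1 / K"
  have am1: "am \<ge> 1" using a0 unfolding am_def by linarith
  have ps1: "ps \<ge> 1" using p0 unfolding ps_def by (simp add: one_le_power)
  have Kp: "K > 0" using am1 ps1 unfolding K_def by simp
  have rp: "r > 0" using Kp unfolding r_def by simp
  have Ar: "am * r \<le> 1"
  proof -
    have "am * r = 1 / ps" using Kp am1 ps1 unfolding r_def K_def by (simp add: field_simps)
    then show ?thesis using ps1 by simp
  qed
  have out: "\<forall>G\<in>set Gs. \<exists>z. poly G z = 0 \<and> norm z \<ge> r"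
  proof
    fix G assume "G \<in> set Gs"
    then obtain g where g: "g \<in> set fs" "G = map_poly of_int g" unfolding Gs_def by auto
    have gd: "g dvd f" using g(1) fs(1) by (simp add: prod_list_dvd)
    then obtain h where h: "f = g * h" by blast
    have gnz: "g \<noteq> 0" "h \<noteq> 0" using h fnz by auto
    have irr: "irreducible g" using fs(2) g(1) by auto
    have dg: "degree g \<ge> 1"
    proof (rule ccontr)
      assume "\<not> degree g \<ge> 1"
      then have "degree g = 0" by simp
      then have gc: "g = [:coeff g 0:]" by (rule degree_eq_zeroE) simp
      then have "coeff g 0 dvd content f" using gd const_poly_dvd_iff_dvd_content by metis
      then have "is_unit (coeff g 0)" using prim by simp
      then have "is_unit g" by (subst gc) (simp add: is_unit_const_poly_iff)
      then show False using irr by (simp add: irreducible_def)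
    qed
    have g0: "coeff g 0 \<noteq> 0" using c0 h by (simp add: coeff_mult_0)
    have "lead_coeff f = lead_coeff g * lead_coeff h" using h by (simp add: lead_coeff_mult)
    then have "\<bar>lead_coeff g\<bar> \<le> \<bar>a m\<bar>" using lcf gnz
      by (simp add: abs_mult) (metis abs_ge_self dual_order.trans mult_le_cancel_left1 abs_le_zero_iff
          int_one_le_iff_zero_less leading_coeff_0_iff not_le zero_less_abs_iff abs_ge_zero mult_right_mono)
    then have lc: "\<bar>of_int (lead_coeff g)\<bar> \<le> am" unfolding am_def by linarith
    show "\<exists>z. poly G z = 0 \<and> norm z \<ge> r"
      using root_outside[OF dg g0 lc rp Ar] g(2) by simp
  qed
  define c where "c = (of_int (p ^ N * a j) :: complex)"
  have cnz: "c \<noteq> 0" using a0 p0 unfolding c_def by simp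
  define B where "B i = real_of_int \<bar>coeff f i\<bar>" for i
  define A where "A i = real_of_int \<bar>a i\<bar>" for i
  have key: "(\<Sum>i\<in>{..m} - {j}. B i * (1 / K) ^ i) < B j * (1 / K) ^ j"
  proof (rule key_ineq[OF K_def am1 ps1 j(1) jm, where A = A])
    show "B (j - 1) = ps * A (j - 1)" using j unfolding B_def A_def ps_def cf
      by (simp add: abs_mult p0 less_imp_le)
    show "B i = A i" if "i \<le> m" "i \<noteq> j - 1" "i \<noteq> j" for i
      using that unfolding B_def A_def cf by simp
    show "A i \<ge> 0" for i unfolding A_def by simp
    have "j \<noteq> j - 1" using j by simp
    then have "B j = real_of_int (p ^ N * \<bar>a j\<bar>)" unfolding B_def cf
      by (simp add: abs_mult p0 less_imp_le)
    moreover have "real_of_int (\<bar>a m * a (j - 1)\<bar> * p ^ (2 * s)) = am * A (j - 1) * ps ^ 2"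
      unfolding am_def A_def ps_def by (simp add: abs_mult power_mult mult.commute)
    moreover have "(\<Sum>i=2..j. real_of_int (\<bar>a m ^ i * a (j - i)\<bar> * p ^ (i * s)))
                   = (\<Sum>i=2..j. am ^ i * A (j - i) * ps ^ i)"
    proof (intro sum.cong refl)
      fix x :: nat
      have pc: "(real_of_int p ^ x) ^ s = (real_of_int p ^ s) ^ x"
        by (simp add: power_mult[symmetric] mult.commute)
      show "real_of_int (\<bar>a m ^ x * a (j - x)\<bar> * p ^ (x * s)) = am ^ x * A (j - x) * ps ^ x"
        unfolding am_def A_def ps_def by (simp add: abs_mult power_abs power_mult pc)
    qed
    moreover have "(\<Sum>i=j+1..m. real_of_int \<bar>a i\<bar> / real_of_int \<bar>a m\<bar> ^ (i - j))
                   = (\<Sum>i=j+1..m. A i / am ^ (i - j))"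
      unfolding am_def A_def by simp
    ultimately show "B j > am * A (j - 1) * ps ^ 2 + (\<Sum>i=2..j. am ^ i * A (j - i) * ps ^ i)
                 + (\<Sum>i=j+1..m. A i / am ^ (i - j))" using ineq by simp
  qed
  have bnd: "norm (poly F z - c * z ^ j) < norm (c * z ^ j)" if z: "norm z = r" for z
  proof -
    have "poly F z = (\<Sum>i\<le>m. coeff F i * z ^ i)" by (simp add: poly_altdef degF)
    also have "\<dots> = coeff F j * z ^ j + (\<Sum>i\<in>{..m} - {j}. coeff F i * z ^ i)"
      using jm by (subst sum.remove[of _ j]) auto
    also have "coeff F j = c" unfolding cF c_def cf using jj by simp
    finally have "poly F z - c * z ^ j = (\<Sum>i\<in>{..m} - {j}. coeff F i * z ^ i)" by simp
    then have "norm (poly F z - c * z ^ j) \<le> (\<Sum>i\<in>{..m} - {j}. norm (coeff F i * z ^ i))"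
      by (simp add: norm_sum)
    also have "\<dots> = (\<Sum>i\<in>{..m} - {j}. B i * (1 / K) ^ i)"
      by (intro sum.cong) (simp_all add: norm_mult norm_power z cF B_def r_def norm_of_int)
    also have "\<dots> < B j * (1 / K) ^ j" by (rule key)
    also have "\<dots> = norm (c * z ^ j)"
    proof -
      have cj: "coeff f j = p ^ N * a j" using cf jj by simp
      have nc: "norm c = B j" unfolding c_def B_def cj by (metis norm_of_int of_int_abs)
      show ?thesis using nc z by (simp add: norm_mult norm_power r_def)
    qed
    finally show ?thesis .
  qed
  have inn: "(\<Sum>x\<in>{x. poly F x = 0 \<and> norm x < r}. order x F) = j"
    by (rule roots_inside[OF Fnz rp cnz]) (use j bnd in auto)
  have "length Gs + j \<le> m" using count_factors[OF FG Fnz out inn] degF by simp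
  then have len: "length fs \<le> m - j" unfolding Gs_def by simp
  have P: "product_of_at_most_irreducibles (m - j) f"
    unfolding product_of_at_most_irreducibles_def using fs len by blast
  moreover have "irreducible f" if "j = m - 1"
  proof -
    have "length fs \<le> 1" using len that m by simp
    moreover have "fs \<noteq> []" using fs(1) nu by auto
    ultimately obtain g where "fs = [g]" by (cases fs) auto
    then show ?thesis using fs by simp
  qed
  ultimately show ?thesis by blast
qed

end
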